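(* Let $G$ be a graph and let $c_1,\ldots,c_m$ be proper colorings of $G$. For any choice of positive integers $d_1,\ldots,d_m$ with $d_1+\cdots+d_m=\operatorname{ind}(\operatorname{Hom}(K_2,G))$, there exists a complete bipartite subgraph of $G$ that, for each $i\in[m]$, contains a subgraph isomorphic to $K_{\lceil d_i/2\rceil+1,\lfloor d_i/2\rfloor+1}$ which is colorful with respect to $c_i$ (i.e., whose vertices receive pairwise distinct colors under $c_i$).
   Context: For a graph $G=(V,E)$, $\operatorname{Hom}(K_2,G)$ is the poset whose elements are the pairs $(A,B)$ of non-empty disjoint subsets of $V$ such that every vertex of $A$ is adjacent to every vertex of $B$, ordered by $(A,B)\preceq(A',B')$ iff $A\subseteq A'$ and $B\subseteq B'$; it is identified with its order complex (vertices are poset elements, simplices are chains), which carries the free $\mathbb{Z}_2$-action $(A,B)\mapsto(B,A)$. The $\mathbb{Z}_2$-index $\operatorname{ind}(\mathsf{K})$ of a free simplicial $\mathbb{Z}_2$-complex $\mathsf{K}$ is the minimal $d$ such that there is a continuous map from $\mathsf{K}$ to $\mathcal{S}^d$ commuting with the $\mathbb{Z}_2$-actions (antipodal map on $\mathcal{S}^d$). *)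

theory Defs
  imports "HOL-Analysis.Analysis"
begin

definition simple_graph :: "'v set \<Rightarrow> ('v \<Rightarrow> 'v \<Rightarrow> bool) \<Rightarrow> bool" where
  "simple_graph V E \<longleftrightarrow> finite V \<and> (\<forall>u v. E u v \<longrightarrow> u \<in> V \<and> v \<in> V)
     \<and> (\<forall>u v. E u v \<longrightarrow> E v u) \<and> (\<forall>v. \<not> E v v)"

definition proper_coloring :: "'v set \<Rightarrow> ('v \<Rightarrow> 'v \<Rightarrow> bool) \<Rightarrow> ('v \<Rightarrow> 'c) \<Rightarrow> bool" where
  "proper_coloring V E c \<longleftrightarrow> (\<forall>u\<in>V. \<forall>v\<in>V. E u v \<longrightarrow> c u \<noteq> c v)"

definition HomK2 :: "'v set \<Rightarrow> ('v \<Rightarrow> 'v \<Rightarrow> bool) \<Rightarrow> ('v set \<times> 'v set) set" where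
  "HomK2 V E = {(A,B). A \<noteq> {} \<and> B \<noteq> {} \<and> A \<subseteq> V \<and> B \<subseteq> V \<and> A \<inter> B = {}
                       \<and> (\<forall>a\<in>A. \<forall>b\<in>B. E a b)}"

definition hom_le :: "'v set \<times> 'v set \<Rightarrow> 'v set \<times> 'v set \<Rightarrow> bool" where
  "hom_le p q \<longleftrightarrow> fst p \<subseteq> fst q \<and> snd p \<subseteq> snd q"

definition is_chain_in :: "('a \<Rightarrow> 'a \<Rightarrow> bool) \<Rightarrow> 'a set \<Rightarrow> bool" where
  "is_chain_in le S \<longleftrightarrow> (\<forall>x\<in>S. \<forall>y\<in>S. le x y \<or> le y x)"

text \<open>Geometric realization of the order complex of a finite poset (P, le): points are
  barycentric coordinate functions supported on P whose support is a chain (a simplex).\<close>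
definition order_complex_points :: "'a set \<Rightarrow> ('a \<Rightarrow> 'a \<Rightarrow> bool) \<Rightarrow> ('a \<Rightarrow> real) set" where
  "order_complex_points P le = {x. (\<forall>p. 0 \<le> x p) \<and> (\<forall>p. p \<notin> P \<longrightarrow> x p = 0)
       \<and> sum x P = 1 \<and> is_chain_in le {p\<in>P. 0 < x p}}"

definition order_complex_top :: "'a set \<Rightarrow> ('a \<Rightarrow> 'a \<Rightarrow> bool) \<Rightarrow> ('a \<Rightarrow> real) topology" where
  "order_complex_top P le = subtopology (powertop_real UNIV) (order_complex_points P le)"

definition HomK2_top :: "'v set \<Rightarrow> ('v \<Rightarrow> 'v \<Rightarrow> bool) \<Rightarrow> (('v set \<times> 'v set) \<Rightarrow> real) topology" where
  "HomK2_top V E = order_complex_top (HomK2 V E) hom_le"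

definition HomK2_swap :: "(('v set \<times> 'v set) \<Rightarrow> real) \<Rightarrow> (('v set \<times> 'v set) \<Rightarrow> real)" where
  "HomK2_swap x = (\<lambda>(A,B). x (B,A))"

definition antipodal :: "(nat \<Rightarrow> real) \<Rightarrow> (nat \<Rightarrow> real)" where
  "antipodal y = (\<lambda>i. - y i)"

text \<open>Z_2-index: least d such that there is a Z_2-equivariant continuous map into S^d;
  by the standard convention the index of the empty complex is -1.\<close>
definition z2_index :: "'a topology \<Rightarrow> ('a \<Rightarrow> 'a) \<Rightarrow> int" where
  "z2_index X \<nu> = (if topspace X = {} then -1 else
     int (LEAST d. \<exists>f. continuous_map X (nsphere d) f
                        \<and> (\<forall>x\<in>topspace X. f (\<nu> x) = antipodal (f x))))"

definition ind_HomK2 :: "'v set \<Rightarrow> ('v \<Rightarrow> 'v \<Rightarrow> bool) \<Rightarrow> int" where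
  "ind_HomK2 V E = z2_index (HomK2_top V E) HomK2_swap"

definition complete_bipartite_sub :: "'v set \<Rightarrow> ('v \<Rightarrow> 'v \<Rightarrow> bool) \<Rightarrow> 'v set \<Rightarrow> 'v set \<Rightarrow> bool" where
  "complete_bipartite_sub V E X Y \<longleftrightarrow> X \<noteq> {} \<and> Y \<noteq> {} \<and> X \<subseteq> V \<and> Y \<subseteq> V \<and> X \<inter> Y = {}
     \<and> (\<forall>x\<in>X. \<forall>y\<in>Y. E x y)"

definition contains_colorful_Kpq ::
  "'v set \<Rightarrow> 'v set \<Rightarrow> nat \<Rightarrow> nat \<Rightarrow> ('v \<Rightarrow> 'c) \<Rightarrow> bool" where
  "contains_colorful_Kpq X Y p q c \<longleftrightarrow> (\<exists>X' Y'. X' \<subseteq> X \<and> Y' \<subseteq> Y \<and>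
      ((card X' = p \<and> card Y' = q) \<or> (card X' = q \<and> card Y' = p)) \<and>
      inj_on c (X' \<union> Y'))"

end

theory Submission
  imports Defs
begin


lemma colorful_exists:
  assumes "finite A" "finite B" "c ` A \<inter> c ` B = {}"
    "p \<le> card (c ` A)" "q \<le> card (c ` B)"
  shows "contains_colorful_Kpq A B p q c"
proof -
  obtain S where S: "S \<subseteq> c ` A" "card S = p" "finite S"
    using obtain_subset_with_card_n[OF assms(4)] by metis
  obtain T where T: "T \<subseteq> c ` B" "card T = q" "finite T"
    using obtain_subset_with_card_n[OF assms(5)] by metis
  define X where "X = inv_into A c ` S"
  define Y where "Y = inv_into B c ` T"
  have XA: "X \<subseteq> A" using S(1) unfolding X_def by (auto intro: inv_into_into)
  have YB: "Y \<subseteq> B" using T(1) unfolding Y_def by (auto intro: inv_into_into)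
  have cX: "c ` X = S" unfolding X_def using S(1)
    by (auto simp: image_image f_inv_into_f subset_iff)
  have cY: "c ` Y = T" unfolding Y_def using T(1)
    by (auto simp: image_image f_inv_into_f subset_iff)
  have iX: "inj_on (inv_into A c) S" using S(1) inj_on_inv_into by blast
  have iY: "inj_on (inv_into B c) T" using T(1) inj_on_inv_into by blast
  have cardX: "card X = p" unfolding X_def using card_image[OF iX] S by simp
  have cardY: "card Y = q" unfolding Y_def using card_image[OF iY] T by simp
  have fX: "finite X" "finite Y" using XA YB assms finite_subset by auto
  have injX: "inj_on c X" using eq_card_imp_inj_on[OF fX(1), of c] cX cardX S by simp
  have injY: "inj_on c Y" using eq_card_imp_inj_on[OF fX(2), of c] cY cardY T by simp
  have disj: "c ` X \<inter> c ` Y = {}" using XA YB assms(3) by blast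
  have "inj_on c (X \<union> Y)" using injX injY disj unfolding inj_on_Un by blast
  then show ?thesis unfolding contains_colorful_Kpq_def using XA YB cardX cardY by blast
qed

lemma contains_sym: "contains_colorful_Kpq A B p q c = contains_colorful_Kpq B A p q c"
  unfolding contains_colorful_Kpq_def by (metis Un_commute)

lemma ceil_half: "nat \<lceil>real d / 2\<rceil> = (d + 1) div 2"
proof -
  have "\<lceil>real d / 2\<rceil> = \<lceil>real_of_int (int d) / real_of_int 2\<rceil>" by simp
  also have "\<dots> = - (- int d div 2)" by (rule ceiling_divide_eq_div)
  finally have "\<lceil>real d / 2\<rceil> = - (- int d div 2)" .
  moreover have "- (- int d div 2) = int ((d + 1) div 2)" by presburger
  ultimately show ?thesis by simp
qed

lemma floor_half: "nat \<lfloor>real d / 2\<rfloor> = d div 2"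
  using floor_divide_of_nat_eq[of d 2, where 'a=real] by simp

lemma lev_bound:
  fixes al be dd :: nat
  assumes "1 \<le> al" "1 \<le> be"
    "\<not> (al \<ge> (dd + 1) div 2 + 1 \<and> be \<ge> dd div 2 + 1)"
    "\<not> (al \<ge> dd div 2 + 1 \<and> be \<ge> (dd + 1) div 2 + 1)"
  shows "(if al = be then 2 * al - 1 else 2 * min al be) \<le> dd"
    "1 \<le> (if al = be then 2 * al - 1 else 2 * min al be)"
  using assms by (auto split: if_splits)



locale hk_ctx =
  fixes V :: "'v set" and E :: "'v \<Rightarrow> 'v \<Rightarrow> bool"
    and c :: "nat \<Rightarrow> 'v \<Rightarrow> 'c" and d :: "nat \<Rightarrow> nat" and m :: nat
  assumes sg: "simple_graph V E"
    and pc: "\<forall>i<m. proper_coloring V E (c i)"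
    and nocl: "\<forall>p\<in>HomK2 V E. \<exists>i<m. \<not> contains_colorful_Kpq (fst p) (snd p)
        (nat \<lceil>real (d i) / 2\<rceil> + 1) (nat \<lfloor>real (d i) / 2\<rfloor> + 1) (c i)"
begin

definition cont where "cont i A B = contains_colorful_Kpq A B
        (nat \<lceil>real (d i) / 2\<rceil> + 1) (nat \<lfloor>real (d i) / 2\<rfloor> + 1) (c i)"
definition fi where "fi p = (LEAST i. i < m \<and> \<not> cont i (fst p) (snd p))"
definition al where "al i A = card (c i ` A)"
definition tb where "tb i A B = (Min (to_nat_on (c i ` V) ` c i ` A) < Min (to_nat_on (c i ` V) ` c i ` B))"
definition lev where "lev i A B = (if al i A = al i B then 2 * al i A - 1 else 2 * min (al i A) (al i B))"
definition pos where "pos i A B = (if al i A = al i B then tb i A B else al i A > al i B)"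
definition off where "off i = (\<Sum>l<i. d l)"
definition idx where "idx p = off (fi p) + lev (fi p) (fst p) (snd p) - 1"
definition sgn' where "sgn' p = (if pos (fi p) (fst p) (snd p) then 1 else - 1 :: real)"
definition sw where "sw p = (snd p, fst p)"

lemma P_props:
  assumes "p \<in> HomK2 V E"
  shows "finite (fst p)" "finite (snd p)" "fst p \<noteq> {}" "snd p \<noteq> {}" "fst p \<subseteq> V" "snd p \<subseteq> V"
    "fst p \<inter> snd p = {}" "\<forall>a\<in>fst p. \<forall>b\<in>snd p. E a b"
proof -
  have fV: "finite V" using sg unfolding simple_graph_def by blast
  have h: "fst p \<noteq> {} \<and> snd p \<noteq> {} \<and> fst p \<subseteq> V \<and> snd p \<subseteq> V \<and> fst p \<inter> snd p = {}
                       \<and> (\<forall>a\<in>fst p. \<forall>b\<in>snd p. E a b)"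
    using assms unfolding HomK2_def by (cases p) simp
  then show "finite (fst p)" "finite (snd p)" "fst p \<noteq> {}" "snd p \<noteq> {}" "fst p \<subseteq> V" "snd p \<subseteq> V"
    "fst p \<inter> snd p = {}" "\<forall>a\<in>fst p. \<forall>b\<in>snd p. E a b"
    using fV finite_subset by blast+
qed

lemma sw_P: assumes "p \<in> HomK2 V E" shows "sw p \<in> HomK2 V E"
proof -
  have sy: "\<And>u v. E u v \<Longrightarrow> E v u" using sg unfolding simple_graph_def by blast
  obtain A B where p: "p = (A, B)" by (cases p)
  have "\<forall>a\<in>B. \<forall>b\<in>A. E a b" using assms unfolding p HomK2_def by (simp add: sy)
  then show ?thesis using assms unfolding HomK2_def sw_def p by (simp add: Int_commute)
qed

lemma cont_sym: "cont i A B = cont i B A"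
  unfolding cont_def using contains_sym by metis

lemma fi: assumes "p \<in> HomK2 V E" shows "fi p < m" "\<not> cont (fi p) (fst p) (snd p)"
proof -
  have "\<exists>i. i < m \<and> \<not> cont i (fst p) (snd p)" using nocl assms unfolding cont_def by blast
  from LeastI_ex[OF this] show "fi p < m" "\<not> cont (fi p) (fst p) (snd p)" unfolding fi_def by auto
qed

lemma fi_sw: "fi (sw p) = fi p"
proof -
  have "\<And>i. cont i (snd p) (fst p) = cont i (fst p) (snd p)" using cont_sym by blast
  then show ?thesis unfolding fi_def sw_def by simp
qed

lemma col_disj: assumes "p \<in> HomK2 V E" "i < m" shows "c i ` fst p \<inter> c i ` snd p = {}"
proof -
  have pr: "\<forall>u\<in>V. \<forall>v\<in>V. E u v \<longrightarrow> c i u \<noteq> c i v" using pc assms(2) unfolding proper_coloring_def by blast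
  have "False" if hx: "x \<in> c i ` fst p" "x \<in> c i ` snd p" for x
  proof -
    obtain a b where ab: "a \<in> fst p" "b \<in> snd p" "x = c i a" "x = c i b" using hx by blast
    have "E a b" using P_props(8)[OF assms(1)] ab by blast
    moreover have "a \<in> V" "b \<in> V" using P_props(5,6)[OF assms(1)] ab by blast+
    ultimately show False using pr ab by metis
  qed
  then show ?thesis by blast
qed

lemma al_pos: assumes "p \<in> HomK2 V E" shows "1 \<le> al i (fst p)" "1 \<le> al i (snd p)"
  using P_props[OF assms] unfolding al_def by (auto simp: Suc_le_eq card_gt_0_iff)

lemma lev_bounds: assumes "p \<in> HomK2 V E"
  shows "1 \<le> lev (fi p) (fst p) (snd p)" "lev (fi p) (fst p) (snd p) \<le> d (fi p)"
proof -
  let ?i = "fi p"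
  have nc: "\<not> cont ?i (fst p) (snd p)" "\<not> cont ?i (snd p) (fst p)" using fi[OF assms] cont_sym by auto
  have dj: "c ?i ` fst p \<inter> c ?i ` snd p = {}" using col_disj[OF assms fi(1)[OF assms]] .
  have h1: "\<not> (al ?i (fst p) \<ge> (d ?i + 1) div 2 + 1 \<and> al ?i (snd p) \<ge> d ?i div 2 + 1)"
  proof
    assume "(d ?i + 1) div 2 + 1 \<le> al ?i (fst p) \<and> d ?i div 2 + 1 \<le> al ?i (snd p)"
    then have "cont ?i (fst p) (snd p)" unfolding cont_def ceil_half floor_half al_def
      using colorful_exists P_props[OF assms] dj by blast
    with nc show False by simp
  qed
  have h2: "\<not> (al ?i (fst p) \<ge> d ?i div 2 + 1 \<and> al ?i (snd p) \<ge> (d ?i + 1) div 2 + 1)"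
  proof
    assume "d ?i div 2 + 1 \<le> al ?i (fst p) \<and> (d ?i + 1) div 2 + 1 \<le> al ?i (snd p)"
    then have "cont ?i (snd p) (fst p)" unfolding cont_def ceil_half floor_half al_def
      using colorful_exists P_props[OF assms] dj by (metis inf_commute)
    with nc show False by simp
  qed
  show "1 \<le> lev (fi p) (fst p) (snd p)" "lev (fi p) (fst p) (snd p) \<le> d (fi p)"
    unfolding lev_def using lev_bound[OF al_pos[OF assms] h1 h2] by auto
qed

lemma off_mono: "i \<le> j \<Longrightarrow> off i \<le> off j"
  unfolding off_def by (rule sum_mono2) auto

lemma off_Suc: "off (Suc i) = off i + d i"
  unfolding off_def by simp

lemma idx_lt: assumes "p \<in> HomK2 V E" shows "idx p < (\<Sum>i<m. d i)"
proof -
  have "off (Suc (fi p)) \<le> off m" using off_mono fi(1)[OF assms] by simp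
  then show ?thesis using lev_bounds[OF assms] unfolding idx_def off_Suc by (simp add: off_def)
qed

lemma off_unique:
  assumes "off i \<le> x" "x < off i + d i" "off j \<le> x" "x < off j + d j"
  shows "i = j"
proof (rule ccontr)
  assume "i \<noteq> j"
  then consider "Suc i \<le> j" | "Suc j \<le> i" by linarith
  then show False
  proof cases
    case 1 then show ?thesis using off_mono[OF 1] assms off_Suc[of i] by linarith
  next
    case 2 then show ?thesis using off_mono[OF 2] assms off_Suc[of j] by linarith
  qed
qed

lemma tb_anti: assumes "p \<in> HomK2 V E" "i < m" shows "tb i (snd p) (fst p) = (\<not> tb i (fst p) (snd p))"
proof -
  let ?t = "to_nat_on (c i ` V)"
  have "finite V" using sg unfolding simple_graph_def by blast
  then have inj: "inj_on ?t (c i ` V)" by (intro inj_on_to_nat_on countable_finite) simp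
  have fin: "finite (?t ` c i ` fst p)" "finite (?t ` c i ` snd p)" using P_props[OF assms(1)] by auto
  have ne: "?t ` c i ` fst p \<noteq> {}" "?t ` c i ` snd p \<noteq> {}" using P_props[OF assms(1)] by auto
  have dj: "?t ` c i ` fst p \<inter> ?t ` c i ` snd p = {}"
    using inj col_disj[OF assms] P_props(5,6)[OF assms(1)]
    by (metis image_empty image_mono inj_on_image_Int)
  have "Min (?t ` c i ` fst p) \<noteq> Min (?t ` c i ` snd p)"
    using Min_in[OF fin(1) ne(1)] Min_in[OF fin(2) ne(2)] dj by force
  then show ?thesis unfolding tb_def by linarith
qed

lemma idx_sw: assumes "p \<in> HomK2 V E" shows "idx (sw p) = idx p" "sgn' (sw p) = - sgn' p"
proof -
  show "idx (sw p) = idx p" unfolding idx_def fi_sw unfolding lev_def sw_def by (auto simp: min.commute)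
  have "pos (fi p) (snd p) (fst p) = (\<not> pos (fi p) (fst p) (snd p))"
    unfolding pos_def using tb_anti[OF assms fi(1)[OF assms]] by auto
  then show "sgn' (sw p) = - sgn' p" unfolding sgn'_def fi_sw by (simp add: sw_def)
qed

lemma odd_ne_even: "2 * (a::nat) - 1 = 2 * k \<Longrightarrow> 1 \<le> a \<Longrightarrow> False"
  by presburger

lemma chain_sgn:
  assumes p: "p \<in> HomK2 V E" and q: "q \<in> HomK2 V E" and le: "hom_le p q" and eq: "idx p = idx q"
  shows "sgn' p = sgn' q"
proof -
  have fe: "fi p = fi q"
    using off_unique[of "fi p" "idx p" "fi q"] lev_bounds[OF p] lev_bounds[OF q] eq
    unfolding idx_def by linarith
  define i where "i = fi p"
  have im: "i < m" using fi(1)[OF p] i_def by simp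
  have leq: "lev i (fst p) (snd p) = lev i (fst q) (snd q)"
    using eq lev_bounds[OF p] lev_bounds[OF q] unfolding idx_def fe i_def by linarith
  have sub: "fst p \<subseteq> fst q" "snd p \<subseteq> snd q" using le unfolding hom_le_def by auto
  have cs: "c i ` fst p \<subseteq> c i ` fst q" "c i ` snd p \<subseteq> c i ` snd q" using sub by auto
  have fq: "finite (c i ` fst q)" "finite (c i ` snd q)" using P_props[OF q] by auto
  have a1: "al i (fst p) \<le> al i (fst q)" "al i (snd p) \<le> al i (snd q)"
    unfolding al_def using card_mono[OF fq(1) cs(1)] card_mono[OF fq(2) cs(2)] .
  have pp: "1 \<le> al i (fst p)" "1 \<le> al i (snd p)" using al_pos[OF p] by auto
  have "pos i (fst p) (snd p) = pos i (fst q) (snd q)"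
  proof (cases "al i (fst p) = al i (snd p)")
    case True
    have tq: "al i (fst q) = al i (snd q)"
    proof (rule ccontr)
      assume "al i (fst q) \<noteq> al i (snd q)"
      then have "2 * al i (fst p) - 1 = 2 * min (al i (fst q)) (al i (snd q))"
        using leq True unfolding lev_def by simp
      then show False using pp(1) by (rule odd_ne_even)

    qed
    then have "al i (fst p) = al i (fst q)" "al i (snd p) = al i (snd q)"
      using leq True pp unfolding lev_def by auto
    then have "c i ` fst p = c i ` fst q" "c i ` snd p = c i ` snd q"
      using card_subset_eq[OF fq(1) cs(1)] card_subset_eq[OF fq(2) cs(2)] unfolding al_def by auto
    then show ?thesis unfolding pos_def tb_def using True tq by simp
  next
    case False
    have tq: "al i (fst q) \<noteq> al i (snd q)"
    proof
      assume "al i (fst q) = al i (snd q)"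
      then have "2 * al i (fst q) - 1 = 2 * min (al i (fst p)) (al i (snd p))"
        using leq False unfolding lev_def by simp
      then show False using pp(1) a1 by (intro odd_ne_even[of "al i (fst q)"]) auto

    qed
    have "min (al i (fst p)) (al i (snd p)) = min (al i (fst q)) (al i (snd q))"
      using leq False tq unfolding lev_def by auto
    then show ?thesis unfolding pos_def using False tq a1 by auto
  qed
  then show ?thesis unfolding sgn'_def fe i_def by simp
qed

end


context hk_ctx begin

definition vv where "vv p k = (if k = idx p then sgn' p else 0)"
definition RR where "RR x k = (\<Sum>p\<in>HomK2 V E. x p * vv p k)"
definition nr where "nr x = sqrt (\<Sum>k\<le>(\<Sum>i<m. d i) - 1. (RR x k)\<^sup>2)"
definition ff where "ff x = (\<lambda>k. RR x k / nr x)"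

lemma finP: "finite (HomK2 V E)"
proof -
  have "finite V" using sg unfolding simple_graph_def by blast
  then have "finite (Pow V \<times> Pow V)" by simp
  moreover have "HomK2 V E \<subseteq> Pow V \<times> Pow V" unfolding HomK2_def by auto
  ultimately show ?thesis using finite_subset by blast
qed

lemma topX: "topspace (HomK2_top V E) = order_complex_points (HomK2 V E) hom_le"
  unfolding HomK2_top_def order_complex_top_def by simp

lemma sgn'_cases: "sgn' p = 1 \<or> sgn' p = -1"
  unfolding sgn'_def by simp

lemma RR_nonzero:
  assumes x: "x \<in> order_complex_points (HomK2 V E) hom_le"
  shows "nr x > 0"
proof -
  let ?P = "HomK2 V E"
  let ?N = "(\<Sum>i<m. d i) - 1"
  have x0: "\<forall>p. 0 \<le> x p" and xo: "\<forall>p. p \<notin> ?P \<longrightarrow> x p = 0" and xs: "sum x ?P = 1"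
    and ch: "is_chain_in hom_le {p\<in>?P. 0 < x p}"
    using x unfolding order_complex_points_def by auto
  have "\<exists>p0\<in>?P. 0 < x p0"
  proof (rule ccontr)
    assume "\<not> (\<exists>p0\<in>?P. 0 < x p0)"
    then have "\<forall>p\<in>?P. x p = 0" using x0 by (metis linorder_neqE_linordered_idom not_le)
    then show False using xs by simp
  qed
  then obtain p0 where p0: "p0 \<in> ?P" "0 < x p0" by blast
  define k0 where "k0 = idx p0"
  have k0N: "k0 \<le> ?N" using idx_lt[OF p0(1)] unfolding k0_def by linarith
  have "0 < sgn' p0 * RR x k0"
    unfolding RR_def sum_distrib_left
  proof (rule sum_pos2[OF finP p0(1)])
    show "0 < sgn' p0 * (x p0 * vv p0 k0)" unfolding vv_def k0_def using p0 sgn'_cases[of p0] by auto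
    fix p assume pP: "p \<in> ?P"
    show "0 \<le> sgn' p0 * (x p * vv p k0)"
    proof (cases "0 < x p \<and> k0 = idx p")
      case True
      then have "p \<in> {p\<in>?P. 0 < x p}" "p0 \<in> {p\<in>?P. 0 < x p}" using pP p0 by auto
      then have "hom_le p p0 \<or> hom_le p0 p" using ch unfolding is_chain_in_def by blast
      then have "sgn' p = sgn' p0" using chain_sgn[OF pP p0(1)] chain_sgn[OF p0(1) pP] True
        unfolding k0_def by metis
      then show ?thesis unfolding vv_def using True sgn'_cases[of p0] by auto
    next
      case False
      then have "x p = 0 \<or> k0 \<noteq> idx p" using x0 by (metis linorder_neqE_linordered_idom not_le)
      then show ?thesis unfolding vv_def by auto
    qed
  qed
  then have "RR x k0 \<noteq> 0" by auto
  then have "0 < (\<Sum>k\<le>?N. (RR x k)\<^sup>2)"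
    by (intro sum_pos2[of _ k0]) (use k0N in auto)
  then show ?thesis unfolding nr_def by simp
qed

lemma RR_high: "k > (\<Sum>i<m. d i) - 1 \<Longrightarrow> RR x k = 0"
proof -
  assume k: "k > (\<Sum>i<m. d i) - 1"
  have "\<And>p. p \<in> HomK2 V E \<Longrightarrow> vv p k = 0" unfolding vv_def using idx_lt k by fastforce
  then show ?thesis unfolding RR_def by simp
qed

lemma RR_swap: "RR (HomK2_swap x) k = - RR x k"
proof -
  let ?P = "HomK2 V E"
  have "RR (HomK2_swap x) k = (\<Sum>p\<in>?P. x (sw p) * vv p k)"
    unfolding RR_def HomK2_swap_def sw_def by (simp add: case_prod_beta)
  also have "\<dots> = (\<Sum>p\<in>?P. - (x (sw p) * vv (sw p) k))"
    by (rule sum.cong) (auto simp: vv_def idx_sw)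
  also have "\<dots> = (\<Sum>p\<in>?P. - (x p * vv p k))"
    by (rule sum.reindex_bij_witness[of _ sw sw]) (auto simp: sw_def sw_P[unfolded sw_def])
  also have "\<dots> = - RR x k" unfolding RR_def by (simp add: sum_negf)
  finally show ?thesis .
qed

lemma nr_swap: "nr (HomK2_swap x) = nr x"
  unfolding nr_def RR_swap by simp

lemma map_exists:
  "continuous_map (HomK2_top V E) (nsphere ((\<Sum>i<m. d i) - 1)) ff \<and>
   (\<forall>x\<in>topspace (HomK2_top V E). ff (HomK2_swap x) = antipodal (ff x))"
proof
  let ?X = "HomK2_top V E"
  let ?N = "(\<Sum>i<m. d i) - 1"
  have proj: "continuous_map ?X euclideanreal (\<lambda>x. x p)" for p
    unfolding HomK2_top_def order_complex_top_def
    by (rule continuous_map_from_subtopology[OF continuous_map_product_projection]) simp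
  have cR: "continuous_map ?X euclideanreal (\<lambda>x. RR x k)" for k
    unfolding RR_def by (intro continuous_intros proj finP)
  have cN: "continuous_map ?X euclideanreal nr"
    unfolding nr_def by (intro continuous_intros cR) simp
  have pos: "x \<in> topspace ?X \<Longrightarrow> nr x > 0" for x using RR_nonzero topX by auto
  have cF: "continuous_map ?X euclideanreal (\<lambda>x. ff x k)" for k
    unfolding ff_def by (intro continuous_intros cR cN) (use pos in force)
  have inS: "ff x \<in> {x. (\<Sum>i\<le>?N. x i ^ 2) = 1 \<and> (\<forall>i>?N. x i = 0)}" if "x \<in> topspace ?X" for x
  proof -
    have p: "nr x > 0" using pos that .
    have "(\<Sum>i\<le>?N. (ff x i)^2) = (\<Sum>i\<le>?N. (RR x i)^2) / (nr x)^2"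
      unfolding ff_def by (simp add: power_divide sum_divide_distrib)
    also have "(nr x)^2 = (\<Sum>i\<le>?N. (RR x i)^2)" unfolding nr_def
      by (simp add: sum_nonneg)
    finally have "(\<Sum>i\<le>?N. (ff x i)^2) = 1" using p by (simp add: nr_def)
    moreover have "\<forall>i>?N. ff x i = 0" unfolding ff_def using RR_high by simp
    ultimately show ?thesis by simp
  qed
  show "continuous_map ?X (nsphere ?N) ff"
    unfolding nsphere continuous_map_in_subtopology
    using cF inS by (auto simp: continuous_map_componentwise_UNIV)
  show "\<forall>x\<in>topspace ?X. ff (HomK2_swap x) = antipodal (ff x)"
    unfolding ff_def antipodal_def RR_swap nr_swap by simp
qed

lemma ind_small:
  assumes "topspace (HomK2_top V E) \<noteq> {}"
  shows "ind_HomK2 V E < int (\<Sum>i<m. d i)"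
proof -
  let ?N = "(\<Sum>i<m. d i) - 1"
  obtain x where "x \<in> topspace (HomK2_top V E)" using assms by blast
  then have x: "x \<in> order_complex_points (HomK2 V E) hom_le" using topX by simp
  then have "sum x (HomK2 V E) = 1" unfolding order_complex_points_def by blast
  then have "HomK2 V E \<noteq> {}" by auto
  then obtain p where p: "p \<in> HomK2 V E" by blast
  have npos: "0 < (\<Sum>i<m. d i)" using idx_lt[OF p] by linarith
  have "(LEAST d. \<exists>f. continuous_map (HomK2_top V E) (nsphere d) f
                        \<and> (\<forall>x\<in>topspace (HomK2_top V E). f (HomK2_swap x) = antipodal (f x))) \<le> ?N"
    by (rule Least_le) (rule exI[of _ ff], rule map_exists)
  then have "int (LEAST d. \<exists>f. continuous_map (HomK2_top V E) (nsphere d) f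
                        \<and> (\<forall>x\<in>topspace (HomK2_top V E). f (HomK2_swap x) = antipodal (f x))) < int (\<Sum>i<m. d i)"
    using npos by linarith
  then show ?thesis unfolding ind_HomK2_def z2_index_def using assms by (simp only: if_False)
qed

end

theorem theorem3p3:
  fixes V :: "'v set" and E :: "'v \<Rightarrow> 'v \<Rightarrow> bool"
    and c :: "nat \<Rightarrow> 'v \<Rightarrow> 'c" and d :: "nat \<Rightarrow> nat" and m :: nat
  assumes "simple_graph V E"
    and "\<forall>i<m. proper_coloring V E (c i)"
    and "\<forall>i<m. d i > 0"
    and "int (\<Sum>i<m. d i) = ind_HomK2 V E"
  shows "\<exists>X Y. complete_bipartite_sub V E X Y \<and>
           (\<forall>i<m. contains_colorful_Kpq X Y (nat \<lceil>real (d i) / 2\<rceil> + 1)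
                                           (nat \<lfloor>real (d i) / 2\<rfloor> + 1) (c i))"
proof (rule ccontr)
  assume neg: "\<not> ?thesis"
  have "\<forall>p\<in>HomK2 V E. \<exists>i<m. \<not> contains_colorful_Kpq (fst p) (snd p)
        (nat \<lceil>real (d i) / 2\<rceil> + 1) (nat \<lfloor>real (d i) / 2\<rfloor> + 1) (c i)"
  proof
    fix p assume "p \<in> HomK2 V E"
    then have "complete_bipartite_sub V E (fst p) (snd p)"
      unfolding HomK2_def complete_bipartite_sub_def by (cases p) simp
    then show "\<exists>i<m. \<not> contains_colorful_Kpq (fst p) (snd p)
        (nat \<lceil>real (d i) / 2\<rceil> + 1) (nat \<lfloor>real (d i) / 2\<rfloor> + 1) (c i)"
      using neg by blast
  qed
  then interpret hk: hk_ctx V E c d m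
    using assms(1,2) by unfold_locales
  show False
  proof (cases "topspace (HomK2_top V E) = {}")
    case True
    then have "ind_HomK2 V E = -1" unfolding ind_HomK2_def z2_index_def by simp
    then show False using assms(4) by simp
  next
    case False
    then show False using hk.ind_small assms(4) by simp
  qed
qed

end
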